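(* For every finite simple digraph $G$, ${\sf kw}(G) \leq {\sf circ}(G) + 1$, where ${\sf kw}(G)$ is the Kelly-width of $G$ and ${\sf circ}(G)$ is its circumference.
   Context: All digraphs are finite and simple (no loops, no multiple arcs). The circumference ${\sf circ}(G)$ of a digraph $G$ is the length (number of arcs) of a longest simple directed cycle in $G$; if $G$ is acyclic (a DAG), ${\sf circ}(G)$ is defined to be $1$. For a DAG $T$ and distinct nodes $i,j$, write $i\prec j$ if there is a directed walk in $T$ from $i$ to $j$, and $i\preceq j$ if $i=j$ or $i\prec j$; a root is a node with no incoming arcs, and the children of $i$ are the heads of arcs with tail $i$. Given sets $W_i$ for nodes $i$, let $W_{\succeq j}=\bigcup_{k\succeq j}W_k$. For $W,X\subseteq V(G)$, $X$ guards $W$ if $W\cap X=\emptyset$ and for every arc $(u,v)$ of $G$ with $u\in W$ we have $v\in W\cup X$. A Kelly-decomposition of $G$ is a triple $(T,(W_i)_{i\in V(T)},(X_i)_{i\in V(T)})$ where $T$ is a DAG and all $W_i,X_i\subseteq V(G)$, such that: (1) $(W_i)_i$ is a partition of $V(G)$; (2) for every node $i$, $X_i$ guards $W_{\succeq i}$; (3) for every node $i$, the children of $i$ can be enumerated as $j_1,\dots,j_s$ so that for each $q$, $X_{j_q}\subseteq W_i\cup X_i\cup\bigcup_{p<q}W_{\succeq j_p}$, and the roots of $T$ can be enumerated as $r_1,r_2,\dots$ so that for each $q$, $X_{r_q}\subseteq\bigcup_{p<q}W_{\succeq r_p}$. Its width is $\max_i|W_i\cup X_i|$, and the Kelly-width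 ${\sf kw}(G)$ is the minimum width of a Kelly-decomposition of $G$. *)

theory Defs
  imports Main
begin

definition simple_digraph :: "'a set \<Rightarrow> ('a \<times> 'a) set \<Rightarrow> bool" where
  "simple_digraph V E \<longleftrightarrow> finite V \<and> E \<subseteq> V \<times> V \<and> (\<forall>v. (v, v) \<notin> E)"

text \<open>A simple directed cycle, as the (nonempty, repetition-free) list of its vertices;
  its length (number of arcs) is the length of the list.\<close>

definition is_dcycle :: "'a set \<Rightarrow> ('a \<times> 'a) set \<Rightarrow> 'a list \<Rightarrow> bool" where
  "is_dcycle V E c \<longleftrightarrow> c \<noteq> [] \<and> distinct c \<and> set c \<subseteq> V \<and>
     (\<forall>i < length c. (c ! i, c ! ((i + 1) mod length c)) \<in> E)"

definition circ :: "'a set \<Rightarrow> ('a \<times> 'a) set \<Rightarrow> nat" where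
  "circ V E = (if \<exists>c. is_dcycle V E c
               then Max {length c | c. is_dcycle V E c} else 1)"

definition guards :: "('a \<times> 'a) set \<Rightarrow> 'a set \<Rightarrow> 'a set \<Rightarrow> bool" where
  "guards E X W \<longleftrightarrow> W \<inter> X = {} \<and> (\<forall>(u, v) \<in> E. u \<in> W \<longrightarrow> v \<in> W \<union> X)"

definition Wsucc :: "nat set \<Rightarrow> (nat \<times> nat) set \<Rightarrow> (nat \<Rightarrow> 'a set) \<Rightarrow> nat \<Rightarrow> 'a set" where
  "Wsucc N A W j = \<Union> {W k | k. k \<in> N \<and> (j = k \<or> (j, k) \<in> A\<^sup>+)}"

definition kelly_decomposition ::
  "'a set \<Rightarrow> ('a \<times> 'a) set \<Rightarrow> nat set \<Rightarrow> (nat \<times> nat) set \<Rightarrow>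
     (nat \<Rightarrow> 'a set) \<Rightarrow> (nat \<Rightarrow> 'a set) \<Rightarrow> bool" where
  "kelly_decomposition V E N A W X \<longleftrightarrow>
     finite N \<and> A \<subseteq> N \<times> N \<and> acyclic A \<and>
     (\<forall>i \<in> N. W i \<subseteq> V \<and> X i \<subseteq> V) \<and>
     \<comment> \<open>(1) partition of V\<close>
     (\<Union>i \<in> N. W i) = V \<and> (\<forall>i \<in> N. \<forall>j \<in> N. i \<noteq> j \<longrightarrow> W i \<inter> W j = {}) \<and>
     \<comment> \<open>(2) guarding\<close>
     (\<forall>i \<in> N. guards E (X i) (Wsucc N A W i)) \<and>
     \<comment> \<open>(3) children ordering\<close>
     (\<forall>i \<in> N. \<exists>js. distinct js \<and> set js = {j. (i, j) \<in> A} \<and>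
        (\<forall>q < length js. X (js ! q) \<subseteq>
            W i \<union> X i \<union> (\<Union>p < q. Wsucc N A W (js ! p)))) \<and>
     \<comment> \<open>(3) roots ordering\<close>
     (\<exists>rs. distinct rs \<and> set rs = {r \<in> N. \<forall>i. (i, r) \<notin> A} \<and>
        (\<forall>q < length rs. X (rs ! q) \<subseteq> (\<Union>p < q. Wsucc N A W (rs ! p))))"

definition kelly_width_of :: "nat set \<Rightarrow> (nat \<Rightarrow> 'a set) \<Rightarrow> (nat \<Rightarrow> 'a set) \<Rightarrow> nat" where
  "kelly_width_of N W X = (if N = {} then 0 else Max ((\<lambda>i. card (W i \<union> X i)) ` N))"

definition kw :: "'a set \<Rightarrow> ('a \<times> 'a) set \<Rightarrow> nat" where
  "kw V E = (LEAST k. \<exists>N A W X. kelly_decomposition V E N A W X \<and> kelly_width_of N W X = k)"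

end

theory Submission
  imports Defs
begin

definition apath :: "('a \<times> 'a) set \<Rightarrow> 'a list \<Rightarrow> bool" where
  "apath r xs \<longleftrightarrow> (\<forall>i. Suc i < length xs \<longrightarrow> (xs!i, xs!Suc i) \<in> r)"

definition Erk :: "('a \<times> 'a) set \<Rightarrow> 'a set \<Rightarrow> ('a \<Rightarrow> nat) \<Rightarrow> nat \<Rightarrow> ('a \<times> 'a) set" where
  "Erk E U rk k = {(a,b). (a,b) \<in> E \<and> a \<in> U \<and> b \<in> U \<and> rk a \<le> k \<and> rk b \<le> k}"

definition reachle :: "('a \<times> 'a) set \<Rightarrow> 'a set \<Rightarrow> ('a \<Rightarrow> nat) \<Rightarrow> 'a \<Rightarrow> 'a \<Rightarrow> bool" where
  "reachle E U rk v x \<longleftrightarrow> (v,x) \<in> (Erk E U rk (rk v))\<^sup>*"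

definition Yset :: "('a \<times> 'a) set \<Rightarrow> 'a set \<Rightarrow> ('a \<Rightarrow> nat) \<Rightarrow> 'a \<Rightarrow> 'a set" where
  "Yset E U rk v = {y \<in> U. rk v < rk y \<and> (\<exists>x. reachle E U rk v x \<and> (x,y) \<in> E)}"

definition Res :: "('a \<times> 'a) set \<Rightarrow> 'a set \<Rightarrow> ('a \<times> 'a) set" where
  "Res E U = {(a,b). (a,b) \<in> E \<and> a \<in> U \<and> b \<in> U}"

lemma apath_Cons: "apath r (y # q) \<longleftrightarrow> (q \<noteq> [] \<longrightarrow> (y, hd q) \<in> r) \<and> apath r q"
proof
  assume a: "apath r (y # q)"
  have "q \<noteq> [] \<longrightarrow> (y, hd q) \<in> r"
    using a[unfolded apath_def, rule_format, of 0] by (auto simp: hd_conv_nth)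
  moreover have "apath r q" unfolding apath_def
  proof (intro allI impI)
    fix i assume "Suc i < length q"
    then show "(q ! i, q ! Suc i) \<in> r" using a[unfolded apath_def, rule_format, of "Suc i"] by simp
  qed
  ultimately show "(q \<noteq> [] \<longrightarrow> (y, hd q) \<in> r) \<and> apath r q" by blast
next
  assume a: "(q \<noteq> [] \<longrightarrow> (y, hd q) \<in> r) \<and> apath r q"
  show "apath r (y # q)" unfolding apath_def
  proof (intro allI impI)
    fix i assume i: "Suc i < length (y # q)"
    show "((y # q) ! i, (y # q) ! Suc i) \<in> r"
    proof (cases i)
      case 0 then show ?thesis using a i by (auto simp: hd_conv_nth)
    next
      case (Suc j) then show ?thesis using a i by (auto simp: apath_def)
    qed
  qed
qed

lemma apath_Nil[simp]: "apath r []" by (simp add: apath_def)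

lemma apath_append:
  "apath r xs \<Longrightarrow> apath r ys \<Longrightarrow> (xs \<noteq> [] \<Longrightarrow> ys \<noteq> [] \<Longrightarrow> (last xs, hd ys) \<in> r) \<Longrightarrow> apath r (xs @ ys)"
proof (induction xs)
  case Nil then show ?case by simp
next
  case (Cons a xs)
  show ?case
  proof (cases xs)
    case Nil then show ?thesis using Cons by (simp add: apath_Cons)
  next
    case (Cons b zs) then show ?thesis using Cons.prems Cons.IH by (simp add: apath_Cons)
  qed
qed

lemma apath_drop: "apath r xs \<Longrightarrow> apath r (drop k xs)"
  unfolding apath_def by (auto simp: add.commute)

lemma apath_mono: "apath r xs \<Longrightarrow> r \<subseteq> s \<Longrightarrow> apath s xs"
  unfolding apath_def by blast

lemma apath_cycle:
  assumes "apath r c" "c \<noteq> []" "(last c, hd c) \<in> r" "i < length c"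
  shows "(c!i, c!((i+1) mod length c)) \<in> r"
proof (cases "Suc i < length c")
  case True then show ?thesis using assms(1) by (simp add: apath_def)
next
  case False
  then have "i = length c - 1" using assms(4) by simp
  moreover have "Suc i = length c" using False assms(4) by simp
  then have "(i+1) mod length c = 0" by simp
  ultimately show ?thesis using assms(2,3) by (simp add: last_conv_nth hd_conv_nth)
qed

lemma rtrancl_distinct_path:
  assumes "(v,x) \<in> r\<^sup>*"
  shows "\<exists>q. apath r q \<and> q \<noteq> [] \<and> hd q = v \<and> last q = x \<and> distinct q"
  using assms
proof (induction rule: converse_rtrancl_induct)
  case base
  then show ?case by (intro exI[of _ "[x]"]) (simp add: apath_def)
next
  case (step y z)
  then obtain q where q: "apath r q" "q \<noteq> []" "hd q = z" "last q = x" "distinct q" by blast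
  show ?case
  proof (cases "y \<in> set q")
    case True
    then obtain k where k: "k < length q" "q!k = y" by (auto simp: in_set_conv_nth)
    show ?thesis
      by (intro exI[of _ "drop k q"]) (use q k in \<open>auto simp: apath_drop hd_drop_conv_nth\<close>)
  next
    case False
    show ?thesis
      by (intro exI[of _ "y # q"]) (use q False step in \<open>auto simp: apath_Cons\<close>)
  qed
qed

lemma desc_list:
  assumes "finite (C::nat set)"
  shows "\<exists>js. distinct js \<and> set js = C \<and> (\<forall>p<length js. \<forall>q<length js. js!q < js!p \<longrightarrow> p < q)"
proof -
  define xs where "xs = sorted_list_of_set C"
  have s: "sorted xs" "distinct xs" "set xs = C" using assms by (auto simp: xs_def)
  show ?thesis
  proof (intro exI[of _ "rev xs"] conjI allI impI)
    fix p q assume p: "p < length (rev xs)" and q: "q < length (rev xs)" and lt: "rev xs ! q < rev xs ! p"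
    show "p < q"
    proof (rule ccontr)
      assume "\<not> p < q"
      then have "length xs - Suc p \<le> length xs - Suc q" using p q by simp
      then have "xs ! (length xs - Suc p) \<le> xs ! (length xs - Suc q)"
        using sorted_nth_mono[OF s(1)] q by simp
      then show False using lt p q by (simp add: rev_nth)
    qed
  qed (use s in auto)
qed



lemma reachle_basic:
  assumes EV: "E \<subseteq> V \<times> V" and "reachle E V rk v x" and "v \<in> V"
  shows "x \<in> V \<and> rk x \<le> rk v"
proof -
  have "(v,x) \<in> (Erk E V rk (rk v))\<^sup>*" using assms(2) by (simp add: reachle_def)
  then show ?thesis
    by (induction rule: rtrancl_induct) (use assms(3) in \<open>auto simp: Erk_def\<close>)
qed

lemma reachle_trans:
  assumes EV: "E \<subseteq> V \<times> V" and "reachle E V rk v x" "reachle E V rk x z" "v \<in> V"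
  shows "reachle E V rk v z"
proof -
  have x: "x \<in> V" "rk x \<le> rk v" using reachle_basic[OF EV assms(2,4)] by auto
  have "Erk E V rk (rk x) \<subseteq> Erk E V rk (rk v)" using x by (auto simp: Erk_def)
  then have "(x,z) \<in> (Erk E V rk (rk v))\<^sup>*"
    using assms(3) rtrancl_mono unfolding reachle_def by blast
  then show ?thesis using assms(2) unfolding reachle_def by simp
qed

lemma reachle_refl: "reachle E V rk v v" by (simp add: reachle_def)

lemma reachle_step:
  assumes "reachle E V rk v a" "(a,b) \<in> E" "a \<in> V" "b \<in> V" "rk a \<le> rk v" "rk b \<le> rk v"
  shows "reachle E V rk v b"
proof -
  have "(a,b) \<in> Erk E V rk (rk v)" using assms by (simp add: Erk_def)
  with assms(1) show ?thesis unfolding reachle_def by (rule rtrancl_into_rtrancl)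
qed

lemma kelly_from_rank:
  assumes sd: "simple_digraph V E" and inj: "inj_on rk V"
    and bound: "\<forall>v\<in>V. card (Yset E V rk v) \<le> m"
  shows "kw V E \<le> m + 1"
proof -
  have finV: "finite V" and EV: "E \<subseteq> V \<times> V" using sd by (auto simp: simple_digraph_def)
  let ?R = "reachle E V rk"
  define N where "N = rk ` V"
  define W where "W i = {v\<in>V. rk v = i}" for i
  define X where "X i = {y\<in>V. \<exists>v\<in>V. rk v = i \<and> y \<in> Yset E V rk v}" for i
  define A where "A = {(rk v, rk x) | v x. v \<in> V \<and> x \<in> V \<and> x \<noteq> v \<and> ?R v x}"
  have injD: "x = y" if "x \<in> V" "y \<in> V" "rk x = rk y" for x y
    using inj that unfolding inj_on_def by blast
  have lt: "rk x < rk v" if "v \<in> V" "?R v x" "x \<noteq> v" for v x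
  proof -
    have xV: "x \<in> V" "rk x \<le> rk v" using reachle_basic[OF EV that(2,1)] by auto
    have "rk x \<noteq> rk v"
    proof
      assume "rk x = rk v" then have "x = v" using injD[OF xV(1) that(1)] by simp
      then show False using that(3) by simp
    qed
    then show ?thesis using xV(2) by simp
  qed
  have Ain: "(rk v, rk x) \<in> A \<longleftrightarrow> x \<noteq> v \<and> ?R v x" if v: "v \<in> V" and x: "x \<in> V" for v x
  proof
    assume "(rk v, rk x) \<in> A"
    then obtain v' x' where e: "rk v = rk v'" "rk x = rk x'" and vx': "v' \<in> V" "x' \<in> V" "x' \<noteq> v'" "?R v' x'"
      unfolding A_def by blast
    have "v = v'" using injD[OF v vx'(1) e(1)] .
    moreover have "x = x'" using injD[OF x vx'(2) e(2)] .
    ultimately show "x \<noteq> v \<and> ?R v x" using vx' by simp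
  next
    assume "x \<noteq> v \<and> ?R v x"
    then show "(rk v, rk x) \<in> A" using v x unfolding A_def by blast
  qed
  have AN: "A \<subseteq> N \<times> N" unfolding A_def N_def by blast
  have transA: "trans A"
  proof (rule transI)
    fix i j k assume "(i,j) \<in> A" "(j,k) \<in> A"
    then obtain v x x' z where e: "i = rk v" "j = rk x" "j = rk x'" "k = rk z"
      and V: "v \<in> V" "x \<in> V" "x' \<in> V" "z \<in> V"
      and r: "x \<noteq> v" "?R v x" "z \<noteq> x'" "?R x' z" unfolding A_def by blast
    have "x = x'" using injD[OF V(2) V(3)] e(2,3) by simp
    then have Rvz: "?R v z" using reachle_trans[OF EV r(2) _ V(1)] r(4) by simp
    have "rk z < rk x" using lt[OF V(2)] r(3,4) \<open>x = x'\<close> by simp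
    moreover have "rk x < rk v" using lt[OF V(1) r(2) r(1)] .
    ultimately have "z \<noteq> v" by auto
    then show "(i,k) \<in> A" using e(1,4) V(1,4) Rvz unfolding A_def by blast
  qed
  have Aplus: "A\<^sup>+ = A" using transA by simp
  have acyc: "acyclic A" unfolding acyclic_def Aplus
  proof (intro allI notI)
    fix i assume "(i,i) \<in> A"
    then obtain v x where e: "i = rk v" "i = rk x" and V: "v \<in> V" "x \<in> V" and r: "x \<noteq> v" "?R v x"
      unfolding A_def by blast
    show False using lt[OF V(1) r(2) r(1)] e by simp
  qed
  have Ws: "Wsucc N A W (rk v) = {x. ?R v x}" if v: "v \<in> V" for v
  proof
    show "Wsucc N A W (rk v) \<subseteq> {x. ?R v x}"
    proof
      fix y assume "y \<in> Wsucc N A W (rk v)"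
      then obtain k where k: "k \<in> N" "rk v = k \<or> (rk v, k) \<in> A" "y \<in> W k"
        unfolding Wsucc_def Aplus by blast
      then have y: "y \<in> V" "rk y = k" by (auto simp: W_def)
      show "y \<in> {x. ?R v x}"
      proof (cases "rk v = k")
        case True then have "y = v" using injD[OF y(1) v] y(2) by simp
        then show ?thesis by (simp add: reachle_refl)
      next
        case False then have "(rk v, rk y) \<in> A" using k(2) y(2) by simp
        then show ?thesis using Ain[OF v y(1)] by simp
      qed
    qed
  next
    show "{x. ?R v x} \<subseteq> Wsucc N A W (rk v)"
    proof
      fix y assume "y \<in> {x. ?R v x}"
      then have y: "?R v y" "y \<in> V" using reachle_basic[OF EV _ v, where rk=rk] by auto
      have "rk v = rk y \<or> (rk v, rk y) \<in> A" using Ain[OF v y(2)] y by auto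
      then show "y \<in> Wsucc N A W (rk v)"
        unfolding Wsucc_def Aplus using y by (auto simp: N_def W_def)
    qed
  qed
  have Xs: "X (rk v) = Yset E V rk v" if v: "v \<in> V" for v
  proof
    show "X (rk v) \<subseteq> Yset E V rk v"
    proof
      fix y assume "y \<in> X (rk v)"
      then obtain v' where "v' \<in> V" "rk v' = rk v" "y \<in> Yset E V rk v'" unfolding X_def by blast
      then show "y \<in> Yset E V rk v" using injD[OF \<open>v' \<in> V\<close> v] by simp
    qed
  next
    show "Yset E V rk v \<subseteq> X (rk v)" using v unfolding X_def Yset_def by blast
  qed
  have guard: "guards E (X (rk v)) (Wsucc N A W (rk v))" if v: "v \<in> V" for v
    unfolding guards_def Ws[OF v] Xs[OF v]
  proof (intro conjI ballI impI)
    show "{x. ?R v x} \<inter> Yset E V rk v = {}"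
      using reachle_basic[OF EV _ v, where rk=rk] by (force simp: Yset_def)
  next
    fix e assume e: "e \<in> E"
    obtain a b where ab: "e = (a,b)" by force
    show "case e of (u, w) \<Rightarrow> u \<in> {x. ?R v x} \<longrightarrow> w \<in> {x. ?R v x} \<union> Yset E V rk v"
      unfolding ab
    proof (intro impI case_prodI)
      assume a: "a \<in> {x. ?R v x}"
      have a': "a \<in> V" "rk a \<le> rk v" using reachle_basic[OF EV _ v, where rk=rk] a by auto
      have b: "b \<in> V" using e ab EV by auto
      show "b \<in> {x. ?R v x} \<union> Yset E V rk v"
      proof (cases "rk b \<le> rk v")
        case True then show ?thesis using reachle_step[of E V rk v a b] a a' b e ab by auto
      next
        case False then show ?thesis using a b e ab by (auto simp: Yset_def)
      qed
    qed
  qed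
  have children: "\<exists>js. distinct js \<and> set js = {j. (i, j) \<in> A} \<and>
        (\<forall>q < length js. X (js ! q) \<subseteq> W i \<union> X i \<union> (\<Union>p < q. Wsucc N A W (js ! p)))"
    if i: "i \<in> N" for i
  proof -
    obtain v where v: "v \<in> V" "i = rk v" using i by (auto simp: N_def)
    have fin: "finite {j. (i, j) \<in> A}"
      by (rule finite_subset[of _ N]) (use AN finV in \<open>auto simp: N_def\<close>)
    obtain js where js: "distinct js" "set js = {j. (i, j) \<in> A}"
      "\<forall>p<length js. \<forall>q<length js. js!q < js!p \<longrightarrow> p < q"
      using desc_list[OF fin] by blast
    show ?thesis
    proof (intro exI[of _ js] conjI allI impI js(1) js(2))
      fix q assume q: "q < length js"
      have "js ! q \<in> {j. (i, j) \<in> A}" using js(2) q nth_mem by blast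
      then have jA: "(rk v, js ! q) \<in> A" using v by simp
      then have "js ! q \<in> N" using AN by auto
      then obtain x where x1: "x \<in> V" "js ! q = rk x" by (auto simp: N_def)
      then have x2: "x \<noteq> v" "?R v x" using Ain[OF v(1) x1(1)] jA by auto
      note x = x1 x2
      show "X (js ! q) \<subseteq> W i \<union> X i \<union> (\<Union>p < q. Wsucc N A W (js ! p))"
      proof
        fix y assume "y \<in> X (js ! q)"
        then have y: "y \<in> Yset E V rk x" using Xs x by simp
        then obtain z where z: "?R x z" "(z,y) \<in> E" "y \<in> V" "rk x < rk y" by (auto simp: Yset_def)
        have Rz: "?R v z" using reachle_trans[OF EV x(4) z(1) v(1)] .
        have "z \<in> V" using reachle_basic[OF EV Rz v(1)] by simp
        then have "y \<in> {x. ?R v x} \<union> Yset E V rk v"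
          using guard[OF v(1)] z(2) Rz unfolding guards_def Ws[OF v(1)] Xs[OF v(1)] by blast
        moreover
        { assume Ry: "?R v y" and yv: "y \<noteq> v"
          have "(i, rk y) \<in> A" using Ain v z(3) Ry yv by simp
          then have "rk y \<in> set js" using js(2) by simp
          then obtain p where p: "p < length js" "js ! p = rk y" by (metis in_set_conv_nth)
          then have "p < q" using js(3)[rule_format, OF p(1) q] x(2) z(4) by simp
          moreover have "y \<in> Wsucc N A W (js ! p)" using Ws[OF z(3)] p reachle_refl by auto
          ultimately have "y \<in> (\<Union>p < q. Wsucc N A W (js ! p))" by blast }
        moreover have "y = v \<Longrightarrow> y \<in> W i" using v by (simp add: W_def)
        ultimately show "y \<in> W i \<union> X i \<union> (\<Union>p < q. Wsucc N A W (js ! p))"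
          using Xs v by blast
      qed
    qed
  qed
  have roots: "\<exists>rs. distinct rs \<and> set rs = {r \<in> N. \<forall>i. (i, r) \<notin> A} \<and>
        (\<forall>q < length rs. X (rs ! q) \<subseteq> (\<Union>p < q. Wsucc N A W (rs ! p)))"
  proof -
    have fin: "finite {r \<in> N. \<forall>i. (i, r) \<notin> A}" using finV by (simp add: N_def)
    obtain rs where rs: "distinct rs" "set rs = {r \<in> N. \<forall>i. (i, r) \<notin> A}"
      "\<forall>p<length rs. \<forall>q<length rs. rs!q < rs!p \<longrightarrow> p < q"
      using desc_list[OF fin] by blast
    show ?thesis
    proof (intro exI[of _ rs] conjI allI impI rs(1) rs(2))
      fix q assume q: "q < length rs"
      have "rs ! q \<in> N" using rs(2) q nth_mem by blast
      then obtain r where r: "r \<in> V" "rs ! q = rk r" by (auto simp: N_def)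
      show "X (rs ! q) \<subseteq> (\<Union>p < q. Wsucc N A W (rs ! p))"
      proof
        fix y assume "y \<in> X (rs ! q)"
        then have y: "y \<in> Yset E V rk r" using Xs r by simp
        then have yV: "y \<in> V" and ry: "rk r < rk y" by (auto simp: Yset_def)
        define M where "M = {u \<in> V. ?R u y}"
        have finM: "finite M" using finV by (simp add: M_def)
        have yM: "y \<in> M" using yV by (simp add: M_def reachle_refl)
        have "Max (rk ` M) \<in> rk ` M" using finM yM by (intro Max_in) auto
        then obtain u where u1: "u \<in> M" "rk u = Max (rk ` M)" by force
        have u: "u \<in> M" "\<forall>u'\<in>M. rk u' \<le> rk u"
          using u1 finM by (auto intro: Max_ge)
        have uV: "u \<in> V" and Ruy: "?R u y" using u by (auto simp: M_def)
        have root: "\<forall>i. (i, rk u) \<notin> A"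
        proof (intro allI notI)
          fix i assume "(i, rk u) \<in> A"
          then obtain w where w: "w \<in> V" "i = rk w" using AN by (auto simp: N_def)
          then have "u \<noteq> w" "?R w u" using Ain uV \<open>(i, rk u) \<in> A\<close> by auto
          then have "rk u < rk w" "w \<in> M" using lt w uV reachle_trans[OF EV _ Ruy w(1)]
            by (auto simp: M_def)
          then show False using u(2) by fastforce
        qed
        have "rk y \<le> rk u" using reachle_basic[OF EV Ruy uV] by simp
        have "rk u \<in> set rs" using rs(2) root uV by (simp add: N_def)
        then obtain p where p: "p < length rs" "rs ! p = rk u" by (metis in_set_conv_nth)
        then have "p < q" using rs(3)[rule_format, OF p(1) q] r \<open>rk y \<le> rk u\<close> ry by simp
        moreover have "y \<in> Wsucc N A W (rs ! p)" using Ws[OF uV] p Ruy by auto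
        ultimately show "y \<in> (\<Union>p < q. Wsucc N A W (rs ! p))" by blast
      qed
    qed
  qed
  have kd: "kelly_decomposition V E N A W X"
    unfolding kelly_decomposition_def
  proof (intro conjI)
    show "finite N" using finV by (simp add: N_def)
    show "A \<subseteq> N \<times> N" by (rule AN)
    show "acyclic A" by (rule acyc)
    show "\<forall>i\<in>N. W i \<subseteq> V \<and> X i \<subseteq> V" by (auto simp: W_def X_def)
    show "(\<Union>i \<in> N. W i) = V" by (auto simp: N_def W_def)
    show "\<forall>i\<in>N. \<forall>j\<in>N. i \<noteq> j \<longrightarrow> W i \<inter> W j = {}" by (auto simp: W_def)
    show "\<forall>i\<in>N. guards E (X i) (Wsucc N A W i)" using guard by (auto simp: N_def)
    show "\<forall>i\<in>N. \<exists>js. distinct js \<and> set js = {j. (i, j) \<in> A} \<and>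
        (\<forall>q < length js. X (js ! q) \<subseteq> W i \<union> X i \<union> (\<Union>p < q. Wsucc N A W (js ! p)))"
      using children by blast
    show "\<exists>rs. distinct rs \<and> set rs = {r \<in> N. \<forall>i. (i, r) \<notin> A} \<and>
        (\<forall>q < length rs. X (rs ! q) \<subseteq> (\<Union>p < q. Wsucc N A W (rs ! p)))" by (rule roots)
  qed
  have width: "kelly_width_of N W X \<le> m + 1"
  proof (cases "N = {}")
    case True then show ?thesis by (simp add: kelly_width_of_def)
  next
    case False
    have "card (W i \<union> X i) \<le> m + 1" if iN: "i \<in> N" for i
    proof -
      obtain v where v: "v \<in> V" "i = rk v" using iN unfolding N_def by blast
      have "W i = {v}"
      proof (intro equalityI subsetI)
        fix u assume "u \<in> W i" then have "u \<in> V" "rk u = rk v" using v by (auto simp: W_def)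
        then show "u \<in> {v}" using injD[OF _ v(1)] by blast
      qed (use v in \<open>auto simp: W_def\<close>)
      then have "W i \<union> X i = insert v (Yset E V rk v)" using v Xs by simp
      moreover have "finite (Yset E V rk v)" using finV by (simp add: Yset_def)
      ultimately have "card (W i \<union> X i) \<le> Suc (card (Yset E V rk v))" by (simp add: card_insert_if)
      then show ?thesis using bound v by fastforce
    qed
    then show ?thesis using False finV by (simp add: kelly_width_of_def N_def)
  qed
  have ex: "\<exists>N' A' W' X'. kelly_decomposition V E N' A' W' X' \<and> kelly_width_of N' W' X' = kelly_width_of N W X"
    using kd by (intro exI[of _ N] exI[of _ A] exI[of _ W] exI[of _ X]) simp
  have "kw V E \<le> kelly_width_of N W X"
    unfolding kw_def by (rule Least_le[where P="\<lambda>k. \<exists>N A W X. kelly_decomposition V E N A W X \<and> kelly_width_of N W X = k", OF ex])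
  then show ?thesis using width by simp
qed



lemma Erk_sub_Res: "Erk E U rk k \<subseteq> Res E U" by (auto simp: Erk_def Res_def)

lemma dfs_rank:
  assumes "finite U" "S \<subseteq> U" "\<forall>u\<in>U. \<exists>s\<in>S. (s,u) \<in> (Res E U)\<^sup>*"
  shows "\<exists>rk. inj_on rk U \<and> rk ` U \<subseteq> {..<card U} \<and>
    (\<forall>v\<in>U. \<exists>p. apath E p \<and> p \<noteq> [] \<and> hd p \<in> S \<and> last p = v \<and> distinct p \<and> set p \<subseteq> U \<and>
         (\<forall>z\<in>set p. rk v \<le> rk z) \<and> Yset E U rk v \<subseteq> set p)"
  using assms
proof (induction "card U" arbitrary: U S rule: less_induct)
  case less
  show ?case
  proof (cases "U = {}")
    case True then show ?thesis by auto
  next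
    case False
    then obtain u0 where "u0 \<in> U" by blast
    then obtain s where s: "s \<in> S" using less.prems(3) by blast
    have sU: "s \<in> U" using s less.prems(2) by blast
    define r where "r = Res E U"
    define R where "R = {u. (s,u) \<in> r\<^sup>*}"
    define R' where "R' = R - {s}"
    define S' where "S' = {w \<in> R'. (s,w) \<in> E}"
    define U2 where "U2 = U - R"
    define S2 where "S2 = S - R"
    have rU: "r \<subseteq> U \<times> U" by (auto simp: r_def Res_def)
    have RU: "R \<subseteq> U"
    proof
      fix u assume "u \<in> R"
      then have "(s,u) \<in> r\<^sup>*" by (simp add: R_def)
      then show "u \<in> U" by (induction rule: rtrancl_induct) (use sU rU in auto)
    qed
    have sR: "s \<in> R" by (simp add: R_def)
    have closed: "b \<in> R" if "a \<in> R" "(a,b) \<in> E" "b \<in> U" for a b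
    proof -
      have "(a,b) \<in> r" using that RU by (auto simp: r_def Res_def)
      then show ?thesis using that(1) unfolding R_def by (auto intro: rtrancl_into_rtrancl)
    qed
    have finU: "finite U" by (rule less.prems(1))
    have finR: "finite R" using RU finU finite_subset by blast
    have cardR: "card R = Suc (card R')"
    proof -
      have "card R > 0" using finR sR card_gt_0_iff by blast
      then show ?thesis using finR sR by (simp add: R'_def)
    qed
    have cardU: "card U = card R + card U2"
      using RU finU unfolding U2_def by (metis card_Diff_subset finR card_mono le_add_diff_inverse)
    have R'U: "R' \<subseteq> U" using RU by (auto simp: R'_def)
    have U2U: "U2 \<subseteq> U" by (auto simp: U2_def)
    have reach1: "u = s \<or> (\<exists>w\<in>S'. (w,u) \<in> (Res E R')\<^sup>*)" if "(s,u) \<in> r\<^sup>*" for u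
      using that
    proof (induction rule: rtrancl_induct)
      case base then show ?case by simp
    next
      case (step y z)
      show ?case
      proof (cases "z = s")
        case True then show ?thesis by simp
      next
        case False
        have zR': "z \<in> R'" using step(1,2) False by (auto simp: R_def R'_def intro: rtrancl_into_rtrancl)
        show ?thesis
        proof (cases "y = s")
          case True
          then have "z \<in> S'" using zR' step(2) by (auto simp: S'_def r_def Res_def)
          then show ?thesis by blast
        next
          case yne: False
          then obtain w where w: "w \<in> S'" "(w,y) \<in> (Res E R')\<^sup>*" using step(3) by blast
          have "y \<in> R'" using step(1) yne by (auto simp: R_def R'_def)
          then have "(y,z) \<in> Res E R'" using zR' step(2) by (auto simp: r_def Res_def)
          then show ?thesis using w by (meson rtrancl_into_rtrancl)
        qed
      qed
    qed
    have reachR': "\<forall>u\<in>R'. \<exists>w\<in>S'. (w,u) \<in> (Res E R')\<^sup>*"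
      using reach1 by (auto simp: R'_def R_def)
    have reach2: "s' \<notin> R \<and> (s',u) \<in> (Res E U2)\<^sup>*" if "(s',u) \<in> r\<^sup>*" "u \<notin> R" for s' u
      using that
    proof (induction rule: rtrancl_induct)
      case base then show ?case by simp
    next
      case (step y z)
      have yz: "y \<in> U" "z \<in> U" "(y,z) \<in> E" using step(2) by (auto simp: r_def Res_def)
      have "y \<notin> R" using closed yz step(4) by blast
      then have IH: "s' \<notin> R" "(s',y) \<in> (Res E U2)\<^sup>*" using step(3) by auto
      have "(y,z) \<in> Res E U2" using yz \<open>y \<notin> R\<close> step(4) by (auto simp: Res_def U2_def)
      then show ?case using IH by (meson rtrancl_into_rtrancl)
    qed
    have S2U2: "S2 \<subseteq> U2" using less.prems(2) by (auto simp: S2_def U2_def)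
    have reachU2: "\<forall>u\<in>U2. \<exists>w\<in>S2. (w,u) \<in> (Res E U2)\<^sup>*"
    proof
      fix u assume u: "u \<in> U2"
      then obtain s' where "s' \<in> S" "(s',u) \<in> r\<^sup>*" using less.prems(3) by (auto simp: U2_def r_def)
      then show "\<exists>w\<in>S2. (w,u) \<in> (Res E U2)\<^sup>*" using reach2 u by (auto simp: U2_def S2_def)
    qed
    have c1: "card R' < card U" using cardR cardU by simp
    have c2: "card U2 < card U" using cardR cardU by simp
    have S'R': "S' \<subseteq> R'" by (auto simp: S'_def)
    obtain rk1 where rk1: "inj_on rk1 R'" "rk1 ` R' \<subseteq> {..<card R'}"
      "\<forall>v\<in>R'. \<exists>p. apath E p \<and> p \<noteq> [] \<and> hd p \<in> S' \<and> last p = v \<and> distinct p \<and> set p \<subseteq> R' \<and>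
         (\<forall>z\<in>set p. rk1 v \<le> rk1 z) \<and> Yset E R' rk1 v \<subseteq> set p"
      using less.hyps[OF c1 finite_subset[OF R'U finU] S'R' reachR'] by blast
    obtain rk2 where rk2: "inj_on rk2 U2" "rk2 ` U2 \<subseteq> {..<card U2}"
      "\<forall>v\<in>U2. \<exists>p. apath E p \<and> p \<noteq> [] \<and> hd p \<in> S2 \<and> last p = v \<and> distinct p \<and> set p \<subseteq> U2 \<and>
         (\<forall>z\<in>set p. rk2 v \<le> rk2 z) \<and> Yset E U2 rk2 v \<subseteq> set p"
      using less.hyps[OF c2 finite_subset[OF U2U finU] S2U2 reachU2] by blast
    define rk where "rk u = (if u \<in> R' then rk1 u else if u = s then card R' else card R + rk2 u)" for u
    have rkR': "rk u = rk1 u" "rk u < card R'" if "u \<in> R'" for u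
      using that rk1(2) by (auto simp: rk_def)
    have rks: "rk s = card R'" by (simp add: rk_def R'_def)
    have rkU2: "rk u = card R + rk2 u" "rk u < card U" "card R \<le> rk u" if "u \<in> U2" for u
      using that rk2(2) cardU sR by (auto simp: rk_def R'_def U2_def)
    have rkR: "rk u \<le> card R'" if "u \<in> R" for u
    proof (cases "u = s")
      case True then show ?thesis using rks by simp
    next
      case False then have a: "u \<in> R'" using that by (simp add: R'_def)
      show ?thesis using rkR'(2)[OF a] by simp
    qed
    have Ucases: "u \<in> R' \<or> u = s \<or> u \<in> U2" if "u \<in> U" for u
      using that by (auto simp: R'_def U2_def)
    have inj: "inj_on rk U"
    proof (rule inj_onI)
      fix x y assume x: "x \<in> U" and y: "y \<in> U" and eq: "rk x = rk y"
      show "x = y"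
        using Ucases[OF x] Ucases[OF y]
      proof (elim disjE)
        assume "x \<in> R'" "y \<in> R'" then show ?thesis using eq rk1(1) rkR' by (metis inj_onD)
      next
        assume "x \<in> U2" "y \<in> U2" then show ?thesis using eq rk2(1) rkU2 by (metis inj_onD add_left_cancel)
      qed (use eq rkR' rks rkU2 cardR in \<open>fastforce+\<close>)
    qed
    have bnd: "rk ` U \<subseteq> {..<card U}"
    proof
      fix k assume "k \<in> rk ` U"
      then obtain u where u: "u \<in> U" "k = rk u" by blast
      show "k \<in> {..<card U}" using Ucases[OF u(1)]
      proof (elim disjE)
        assume a: "u \<in> R'" show ?thesis using rkR'[OF a] c1 u(2) by simp
      next
        assume "u = s" then show ?thesis using rks c1 u(2) by simp
      next
        assume a: "u \<in> U2" show ?thesis using rkU2(2)[OF a] u(2) by simp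
      qed
    qed
    have rR': "x \<in> R' \<and> (v,x) \<in> (Erk E R' rk1 (rk1 v))\<^sup>*"
      if v: "v \<in> R'" and "(v,x) \<in> (Erk E U rk (rk v))\<^sup>*" for v x
      using that(2)
    proof (induction rule: rtrancl_induct)
      case base then show ?case using v by simp
    next
      case (step a b)
      have ab: "(a,b) \<in> E" "a \<in> U" "b \<in> U" "rk a \<le> rk v" "rk b \<le> rk v" using step(2) by (auto simp: Erk_def)
      have aR': "a \<in> R'" using step(3) by simp
      have "b \<in> R" using closed[of a b] aR' ab by (auto simp: R'_def)
      moreover have "b \<noteq> s" using ab(5) rks rkR'[OF v] by auto
      ultimately have bR': "b \<in> R'" by (simp add: R'_def)
      have "(a,b) \<in> Erk E R' rk1 (rk1 v)" using ab aR' bR' rkR' v by (auto simp: Erk_def)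
      then show ?case using step(3) bR' by (meson rtrancl_into_rtrancl)
    qed
    have rs: "x \<in> R" if "(s,x) \<in> (Erk E U rk (rk s))\<^sup>*" for x
    proof -
      have "(s,x) \<in> r\<^sup>*" using that rtrancl_mono[OF Erk_sub_Res[of E U rk "rk s"]] by (auto simp: r_def)
      then show ?thesis by (simp add: R_def)
    qed
    have rU2: "x \<in> R \<or> (x \<in> U2 \<and> (v,x) \<in> (Erk E U2 rk2 (rk2 v))\<^sup>*)"
      if v: "v \<in> U2" and "(v,x) \<in> (Erk E U rk (rk v))\<^sup>*" for v x
      using that(2)
    proof (induction rule: rtrancl_induct)
      case base then show ?case using v by simp
    next
      case (step a b)
      have ab: "(a,b) \<in> E" "a \<in> U" "b \<in> U" "rk a \<le> rk v" "rk b \<le> rk v" using step(2) by (auto simp: Erk_def)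
      show ?case
      proof (cases "a \<in> R")
        case True then show ?thesis using closed ab by blast
      next
        case False
        then have a2: "a \<in> U2" "(v,a) \<in> (Erk E U2 rk2 (rk2 v))\<^sup>*" using step(3) by auto
        show ?thesis
        proof (cases "b \<in> R")
          case True then show ?thesis by simp
        next
          case False
          then have b2: "b \<in> U2" using ab by (simp add: U2_def)
          have "(a,b) \<in> Erk E U2 rk2 (rk2 v)" using ab a2 b2 rkU2 v by (auto simp: Erk_def)
          then show ?thesis using a2 b2 by (meson rtrancl_into_rtrancl)
        qed
      qed
    qed
    have inv: "\<exists>p. apath E p \<and> p \<noteq> [] \<and> hd p \<in> S \<and> last p = v \<and> distinct p \<and> set p \<subseteq> U \<and>
         (\<forall>z\<in>set p. rk v \<le> rk z) \<and> Yset E U rk v \<subseteq> set p" if vU: "v \<in> U" for v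
      using Ucases[OF vU]
    proof (elim disjE)
      assume v: "v \<in> R'"
      obtain p1 where p1: "apath E p1" "p1 \<noteq> []" "hd p1 \<in> S'" "last p1 = v" "distinct p1" "set p1 \<subseteq> R'"
        "\<forall>z\<in>set p1. rk1 v \<le> rk1 z" "Yset E R' rk1 v \<subseteq> set p1"
        using rk1(3) v by blast
      have Y: "Yset E U rk v \<subseteq> insert s (set p1)"
      proof
        fix y assume "y \<in> Yset E U rk v"
        then obtain x where y: "y \<in> U" "rk v < rk y" "reachle E U rk v x" "(x,y) \<in> E"
          by (auto simp: Yset_def)
        have x: "x \<in> R'" "(v,x) \<in> (Erk E R' rk1 (rk1 v))\<^sup>*" using rR'[OF v] y(3) by (auto simp: reachle_def)
        have yR: "y \<in> R" using closed[of x y] x y by (auto simp: R'_def)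
        show "y \<in> insert s (set p1)"
        proof (cases "y = s")
          case False
          then have yR': "y \<in> R'" using yR by (simp add: R'_def)
          then have "y \<in> Yset E R' rk1 v" using x y rkR' v by (auto simp: Yset_def reachle_def)
          then show ?thesis using p1(8) by blast
        qed simp
      qed
      have "s \<notin> set p1" using p1(6) by (auto simp: R'_def)
      moreover have "(s, hd p1) \<in> E" using p1(3) by (simp add: S'_def)
      moreover have "rk1 v \<le> card R'" using rkR'[OF v] by simp
      ultimately show ?thesis
        using p1 Y s sU R'U rkR' rks v
        by (intro exI[of _ "s # p1"]) (auto simp: apath_Cons)
    next
      assume v: "v = s"
      have "Yset E U rk s = {}"
      proof (rule ccontr)
        assume "Yset E U rk s \<noteq> {}"
        then obtain y x where y: "y \<in> U" "rk s < rk y" "reachle E U rk s x" "(x,y) \<in> E"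
          by (auto simp: Yset_def)
        have "x \<in> R" using rs y(3) by (simp add: reachle_def)
        then have "y \<in> R" using closed y by blast
        then show False using rkR rks y(2) by fastforce
      qed
      then show ?thesis using v s sU by (intro exI[of _ "[s]"]) (simp add: apath_def)
    next
      assume v: "v \<in> U2"
      obtain p2 where p2: "apath E p2" "p2 \<noteq> []" "hd p2 \<in> S2" "last p2 = v" "distinct p2" "set p2 \<subseteq> U2"
        "\<forall>z\<in>set p2. rk2 v \<le> rk2 z" "Yset E U2 rk2 v \<subseteq> set p2"
        using rk2(3) v by blast
      have Y: "Yset E U rk v \<subseteq> set p2"
      proof
        fix y assume "y \<in> Yset E U rk v"
        then obtain x where y: "y \<in> U" "rk v < rk y" "reachle E U rk v x" "(x,y) \<in> E"
          by (auto simp: Yset_def)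
        have yR: "y \<notin> R" using rkR y(2) rkU2(3)[OF v] cardR by fastforce
        have "x \<notin> R" using closed y yR by blast
        then have x: "x \<in> U2" "(v,x) \<in> (Erk E U2 rk2 (rk2 v))\<^sup>*" using rU2[OF v] y(3) by (auto simp: reachle_def)
        have y2: "y \<in> U2" using y yR by (simp add: U2_def)
        have "y \<in> Yset E U2 rk2 v" using x y y2 rkU2 v by (auto simp: Yset_def reachle_def)
        then show "y \<in> set p2" using p2(8) by blast
      qed
      show ?thesis
        using p2 Y S2U2 U2U rkU2 v
        by (intro exI[of _ p2]) (auto simp: S2_def)
    qed
    show ?thesis using inj bnd inv by blast
  qed
qed



lemma circ_ge:
  assumes "finite V" "is_dcycle V E c"
  shows "length c \<le> circ V E"
proof -
  have sub: "{length c | c. is_dcycle V E c} \<subseteq> {..card V}"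
  proof
    fix k assume "k \<in> {length c | c. is_dcycle V E c}"
    then obtain c' where "k = length c'" "is_dcycle V E c'" by blast
    then have "distinct c'" "set c' \<subseteq> V" by (auto simp: is_dcycle_def)
    then have "length c' \<le> card V" using assms(1) by (metis card_mono distinct_card)
    then show "k \<in> {..card V}" using \<open>k = length c'\<close> by simp
  qed
  have "length c \<le> Max {length c | c. is_dcycle V E c}"
    using assms(2) finite_subset[OF sub] by (intro Max_ge) auto
  then show ?thesis using assms(2) by (auto simp: circ_def)
qed

lemma cycle_bound:
  assumes sd: "simple_digraph V E" and inj: "inj_on rk V" and v: "v \<in> V"
    and p: "apath E p" "p \<noteq> []" "last p = v" "distinct p" "set p \<subseteq> V"
       "\<forall>z\<in>set p. rk v \<le> rk z" "Yset E V rk v \<subseteq> set p"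
  shows "card (Yset E V rk v) \<le> circ V E"
proof (cases "Yset E V rk v = {}")
  case True then show ?thesis by simp
next
  case False
  have finV: "finite V" using sd by (simp add: simple_digraph_def)
  let ?Y = "Yset E V rk v"
  define J where "J = {j. j < length p \<and> p!j \<in> ?Y}"
  obtain y where "y \<in> ?Y" using False by blast
  then obtain j where "j < length p" "p!j = y" using p(7) by (metis in_set_conv_nth subsetD)
  then have Jne: "J \<noteq> {}" using \<open>y \<in> ?Y\<close> by (auto simp: J_def)
  have finJ: "finite J" by (rule finite_subset[of _ "{..<length p}"]) (auto simp: J_def)
  define i where "i = Min J"
  have iJ: "i \<in> J" using Min_in[OF finJ Jne] by (simp add: i_def)
  have imin: "\<And>j. j \<in> J \<Longrightarrow> i \<le> j" using Min_le[OF finJ] by (simp add: i_def)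
  have ip: "i < length p" "p!i \<in> ?Y" using iJ by (auto simp: J_def)
  then obtain x where x: "reachle E V rk v x" "(x, p!i) \<in> E" by (auto simp: Yset_def)
  obtain q where q: "apath (Erk E V rk (rk v)) q" "q \<noteq> []" "hd q = v" "last q = x" "distinct q"
  proof -
    have "(v,x) \<in> (Erk E V rk (rk v))\<^sup>*" using x(1) by (simp add: reachle_def)
    from rtrancl_distinct_path[OF this] show ?thesis using that by blast
  qed
  obtain qt where qdec: "q = v # qt" using q(2,3) by (cases q) auto
  have qtl: "z \<in> V \<and> rk z \<le> rk v" if zq: "z \<in> set qt" for z
  proof -
    obtain k where k: "k < length qt" "qt ! k = z" using zq by (metis in_set_conv_nth)
    then have "Suc k < length q" "q ! Suc k = z" by (auto simp: qdec)
    then have "(q!k, q!Suc k) \<in> Erk E V rk (rk v)" using q(1) unfolding apath_def by blast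
    then have "(q!k, z) \<in> Erk E V rk (rk v)" using \<open>q ! Suc k = z\<close> by simp
    then show ?thesis by (simp add: Erk_def)
  qed
  have vtl: "v \<notin> set qt" using q(5) by (simp add: qdec)
  define c where "c = drop i p @ qt"
  have disj: "set (drop i p) \<inter> set qt = {}"
  proof (rule ccontr)
    assume "set (drop i p) \<inter> set qt \<noteq> {}"
    then obtain z where z: "z \<in> set (drop i p)" "z \<in> set qt" by blast
    then have "z \<in> set p" by (meson in_set_dropD)
    then have "rk v \<le> rk z" "z \<in> V" using p(5,6) by auto
    moreover have "rk z \<le> rk v" using qtl z(2) by simp
    ultimately have "z = v" using inj v unfolding inj_on_def by (metis le_antisym)
    then show False using vtl z(2) by simp
  qed
  have c_dist: "distinct c" unfolding c_def using p(4) q(5) disj by (simp add: qdec)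
  have c_ne: "c \<noteq> []" using ip(1) by (simp add: c_def)
  have c_V: "set c \<subseteq> V" unfolding c_def using p(5) qtl by (auto dest: in_set_dropD)
  have dlast: "last (drop i p) = v" using ip(1) p(3) by simp
  have dhd: "hd (drop i p) = p!i" using ip(1) by (simp add: hd_drop_conv_nth)
  have ErkE: "Erk E V rk (rk v) \<subseteq> E" by (auto simp: Erk_def)
  have c_path: "apath E c" unfolding c_def
  proof (rule apath_append)
    show "apath E (drop i p)" using p(1) by (rule apath_drop)
    have "apath E q" using apath_mono[OF q(1) ErkE] .
    then show "apath E qt" by (simp add: qdec apath_Cons)
    assume "drop i p \<noteq> []" "qt \<noteq> []"
    then have "(v, hd qt) \<in> E" using \<open>apath E q\<close> by (simp add: qdec apath_Cons)
    then show "(last (drop i p), hd qt) \<in> E" using dlast by simp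
  qed
  have c_close: "(last c, hd c) \<in> E"
  proof (cases "qt = []")
    case True
    then have "x = v" using q(4) by (simp add: qdec)
    then show ?thesis using True x(2) dlast dhd by (simp add: c_def)
  next
    case False
    then have "last c = x" using q(4) by (simp add: qdec c_def)
    moreover have "hd c = p!i" using dhd ip(1) by (simp add: c_def)
    ultimately show ?thesis using x(2) by simp
  qed
  have dc: "is_dcycle V E c"
    unfolding is_dcycle_def using c_ne c_dist c_V apath_cycle[OF c_path c_ne c_close] by blast
  have Ysub: "?Y \<subseteq> set (drop i p)"
  proof
    fix y assume y: "y \<in> ?Y"
    then obtain j where j: "j < length p" "p!j = y" using p(7) by (metis in_set_conv_nth subsetD)
    then have "j \<in> J" using y by (simp add: J_def)
    then have "i \<le> j" by (rule imin)
    then have "drop i p ! (j - i) = y" using j ip(1) by simp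
    moreover have "j - i < length (drop i p)" using j \<open>i \<le> j\<close> by simp
    ultimately show "y \<in> set (drop i p)" by (metis nth_mem)
  qed
  have "card ?Y \<le> card (set (drop i p))" using Ysub by (simp add: card_mono)
  also have "\<dots> \<le> length (drop i p)" by (rule card_length)
  also have "\<dots> \<le> length c" by (simp add: c_def)
  also have "\<dots> \<le> circ V E" by (rule circ_ge[OF finV dc])
  finally show ?thesis .
qed

theorem mainTheorem3:
  fixes V :: "'a set" and E :: "('a \<times> 'a) set"
  assumes "simple_digraph V E"
  shows "kw V E \<le> circ V E + 1"
proof -
  have finV: "finite V" using assms by (simp add: simple_digraph_def)
  have reach: "\<forall>u\<in>V. \<exists>s\<in>V. (s,u) \<in> (Res E V)\<^sup>*" by blast
  obtain rk where rk: "inj_on rk V"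
    "\<forall>v\<in>V. \<exists>p. apath E p \<and> p \<noteq> [] \<and> hd p \<in> V \<and> last p = v \<and> distinct p \<and> set p \<subseteq> V \<and>
         (\<forall>z\<in>set p. rk v \<le> rk z) \<and> Yset E V rk v \<subseteq> set p"
    using dfs_rank[OF finV subset_refl reach] by blast
  have "\<forall>v\<in>V. card (Yset E V rk v) \<le> circ V E"
  proof
    fix v assume v: "v \<in> V"
    then obtain p where "apath E p" "p \<noteq> []" "last p = v" "distinct p" "set p \<subseteq> V"
         "\<forall>z\<in>set p. rk v \<le> rk z" "Yset E V rk v \<subseteq> set p" using rk(2) by blast
    then show "card (Yset E V rk v) \<le> circ V E" using cycle_bound[OF assms rk(1) v] by blast
  qed
  then show ?thesis using kelly_from_rank[OF assms rk(1)] by blast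
qed


end
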